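(* Assume $T\ge 3$. For every $z_k\in Z_\theta$ and every $t=0,1,\dots,T-3$, $\bar\epsilon_t(z_k)\le U^\epsilon_t(z_k)\le\bar U^\epsilon_t(\theta)$, where $$U^\epsilon_t(z_k)=\alpha^{T-1-t}\gamma_{T-1}\theta+2\theta\sum_{i=0}^{T-3-t}\sum_{n=1}^{T-1-t-i}\alpha^{n+i}\gamma_{t+i+n}\prod_{m=0}^{n-1}F_{t+i+m}\big(\max(\lambda_t(i),S_{t+i})+(m+1)\theta-s_{t+i+m+1}\big),$$ $$\bar U^\epsilon_t(\theta)=\alpha^{T-1-t}\gamma_{T-1}\theta+2\theta\sum_{i=0}^{T-3-t}\sum_{n=1}^{T-1-t-i}\alpha^{n+i}\gamma_{t+i+n}.$$
   Context: Model. Fix an integer horizon $T$, a discount factor $\alpha\in(0,1]$, and for $t=0,\dots,T-1$: unit ordering costs $c_t\in\mathbb R$, a salvage coefficient $c_T\in\mathbb R$, setup costs $K_t\ge 0$, functions $G_t:\mathbb R\to\mathbb R$, and independent nonnegative random demands $D_0,\dots,D_{T-1}$ with right-continuous distribution functions $F_t$ and finite means; all expectations appearing are assumed finite. Put $C_t(y)=(c_t-\alpha c_{t+1})y+G_t(y)+\alpha c_{t+1}E[D_t]$. Standing assumptions: (i) each $C_t$ is convex with $C_t(y)\to+\infty$ as $|y|\to\infty$; (ii) $K_t\ge \alpha K_{t+1}$ for $t=0,\dots,T-2$; (iii) there are constants $\gamma_t\ge 0$ with $|C_t(x)-C_t(y)|\le\gamma_t|x-y|$ for all $x,y$. Grid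 construction. Fix $\theta>0$, $z_m=m\theta$, $Z_\theta=\{z_m:m\in\mathbb Z\}$, $f_t(n)=F_t(z_{n+1})-F_t(z_n)$ ($n\ge -1$). $C^m_t=\min\{y: C_t(y)=\min_x C_t(x)\}$; with $z_{n_0}<C^m_t\le z_{n_0+1}$, $S^U_t=\min\{z_m\in Z_\theta: z_m\ge C^m_t,\ C_t(z_m)>C_t(z_{n_0})+K_t\}$. $s_{T-1}$ is a point with $s_{T-1}\le C^m_{T-1}$, $C_{T-1}(s_{T-1})=C_{T-1}(C^m_{T-1})+K_{T-1}$; $\bar I_{T-1}=s_{T-1}$. For $t=T-2,\dots,0$: $I_t=\max\{z_m\in Z_\theta: z_m<\min(\bar I_{t+1}-\theta,C^m_t)\}$, $\bar I_t=\max\{z_m\in Z_\theta: z_m\le I_t,\ C_t(z_m)>C_t(I_t)+K_t\}+\theta$. $H_{T-1}=C_{T-1}$, $S_{T-1}=C^m_{T-1}$; $V_t(y)=H_t(S_t)+K_t$ for $y<s_t$, $V_t(y)=H_t(y)$ for $y\ge s_t$. For $t=T-2,\dots,0$: $H_t(y)=C_t(y)+\alpha\sum_{n=-1}^\infty V_{t+1}(y-z_n)f_t(n)$; $S_t=\max\{z_m\in Z_\theta: I_t\le z_m\le S^U_t,\ H_t(z_m)=\min\{H_t(z_n):z_n\in Z_\theta, I_t\le z_n\le S^U_t\}\}$; $s_t=S_t$ if $K_t=0$, else $s_t=\min\{z_m\in Z_\theta:\bar I_t\le z_m\le S_t,\ H_t(z_m)\le H_t(S_t)+K_t\}$. Upper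 estimate functions. $\bar\psi_{T-1}(x,y)=\gamma_{T-1}x$; $\bar\varphi_{T-1}(x,y)=0$ if $y<s_{T-1}$ and $=\gamma_{T-1}x$ if $y\ge s_{T-1}$. For $t=0,\dots,T-2$, with $n$ the integer such that $z_{n-1}\le y-s_{t+1}<z_n$: $\bar\psi_t(x,y)=\gamma_tx$ if $y<s_{t+1}-\theta$, else $\bar\psi_t(x,y)=\gamma_tx+\alpha\sum_{m=-1}^{n-1}\bar\varphi_{t+1}(x,y-z_m)f_t(m)$; $\bar\varphi_t(x,y)=0$ if $y<s_t$, $=\bar\psi_t(y-s_t+\theta,y)$ if $y\ge s_t$ and $y-x<s_t$, $=\bar\psi_t(x,y)$ if $y\ge s_t$ and $y-x\ge s_t$. Bound $\bar\epsilon$. For $z_k\in Z_\theta$: $\bar\epsilon_{T-2}(z_k)=\alpha\gamma_{T-1}\theta$, and for $t=0,\dots,T-3$, $\bar\epsilon_t(z_k)=\alpha^{T-1-t}\gamma_{T-1}\theta+\sum_{i=0}^{T-3-t}2\alpha^i\big[\bar\psi_{t+i}(\theta,\max(\lambda_t(i),S_{t+i}))-\gamma_{t+i}\theta\big]$, where $\lambda_t(0)=z_k$ and $\lambda_t(i)=\max(\lambda_t(i-1),S_{t+i-1})+\theta$ for $i=1,\dots,T-3-t$. *)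

theory Defs
  imports "HOL-Probability.Probability"
begin

definition zg :: "real \<Rightarrow> int \<Rightarrow> real" where
  "zg \<theta> m = of_int m * \<theta>"

definition Fd :: "(nat \<Rightarrow> real measure) \<Rightarrow> nat \<Rightarrow> real \<Rightarrow> real" where
  "Fd D t x = measure (D t) {..x}"

definition Cfun :: "real \<Rightarrow> (nat \<Rightarrow> real) \<Rightarrow> (nat \<Rightarrow> real \<Rightarrow> real) \<Rightarrow> (nat \<Rightarrow> real measure)
                    \<Rightarrow> nat \<Rightarrow> real \<Rightarrow> real" where
  "Cfun \<alpha> c G D t y = (c t - \<alpha> * c (Suc t)) * y + G t y + \<alpha> * c (Suc t) * (\<integral>x. x \<partial>(D t))"

definition Cm :: "(nat \<Rightarrow> real \<Rightarrow> real) \<Rightarrow> nat \<Rightarrow> real" where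
  "Cm C t = Inf {y. \<forall>x. C t y \<le> C t x}"

definition n0 :: "(nat \<Rightarrow> real \<Rightarrow> real) \<Rightarrow> real \<Rightarrow> nat \<Rightarrow> int" where
  "n0 C \<theta> t = (THE n. zg \<theta> n < Cm C t \<and> Cm C t \<le> zg \<theta> (n + 1))"

definition SU :: "(nat \<Rightarrow> real \<Rightarrow> real) \<Rightarrow> (nat \<Rightarrow> real) \<Rightarrow> real \<Rightarrow> nat \<Rightarrow> real" where
  "SU C K \<theta> t = Inf {zg \<theta> m | m. zg \<theta> m \<ge> Cm C t \<and>
                        C t (zg \<theta> m) > C t (zg \<theta> (n0 C \<theta> t)) + K t}"

definition sTm1 :: "(nat \<Rightarrow> real \<Rightarrow> real) \<Rightarrow> (nat \<Rightarrow> real) \<Rightarrow> nat \<Rightarrow> real" where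
  "sTm1 C K T = (THE s. s \<le> Cm C (T - 1) \<and> C (T - 1) s = C (T - 1) (Cm C (T - 1)) + K (T - 1))"

text \<open>Backward recursion: index k corresponds to period t = T - 1 - k.
  The state is (H_t, S_t, s_t, Ibar_t).  The series sum_{n=-1}^infty is written
  with n = j - 1, j a natural number.\<close>
fun gridstate :: "real \<Rightarrow> real \<Rightarrow> nat \<Rightarrow> (nat \<Rightarrow> real \<Rightarrow> real) \<Rightarrow> (nat \<Rightarrow> real)
                  \<Rightarrow> (nat \<Rightarrow> real \<Rightarrow> real) \<Rightarrow> nat \<Rightarrow> (real \<Rightarrow> real) \<times> real \<times> real \<times> real" where
  "gridstate \<alpha> \<theta> T C K F 0 =
     (C (T - 1), Cm C (T - 1), sTm1 C K T, sTm1 C K T)"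
| "gridstate \<alpha> \<theta> T C K F (Suc k) =
     (case gridstate \<alpha> \<theta> T C K F k of (H', S', s', Ib') \<Rightarrow>
      (let t = T - 2 - k;
           V = (\<lambda>y. if y < s' then H' S' + K (Suc t) else H' y);
           f = (\<lambda>n. F t (zg \<theta> (n + 1)) - F t (zg \<theta> n));
           H = (\<lambda>y. C t y + \<alpha> * (\<Sum>j. V (y - zg \<theta> (int j - 1)) * f (int j - 1)));
           I = Sup {zg \<theta> m | m. zg \<theta> m < min (Ib' - \<theta>) (Cm C t)};
           Ib = Sup {zg \<theta> m | m. zg \<theta> m \<le> I \<and> C t (zg \<theta> m) > C t I + K t} + \<theta>;
           SUt = SU C K \<theta> t;
           Hmin = Inf {H (zg \<theta> n) | n. I \<le> zg \<theta> n \<and> zg \<theta> n \<le> SUt};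
           S = Sup {zg \<theta> m | m. I \<le> zg \<theta> m \<and> zg \<theta> m \<le> SUt \<and> H (zg \<theta> m) = Hmin};
           s = (if K t = 0 then S
                else Inf {zg \<theta> m | m. Ib \<le> zg \<theta> m \<and> zg \<theta> m \<le> S \<and> H (zg \<theta> m) \<le> H S + K t})
       in (H, S, s, Ib)))"

definition Hg :: "real \<Rightarrow> real \<Rightarrow> nat \<Rightarrow> (nat \<Rightarrow> real \<Rightarrow> real) \<Rightarrow> (nat \<Rightarrow> real)
                  \<Rightarrow> (nat \<Rightarrow> real \<Rightarrow> real) \<Rightarrow> nat \<Rightarrow> real \<Rightarrow> real" where
  "Hg \<alpha> \<theta> T C K F t = fst (gridstate \<alpha> \<theta> T C K F (T - 1 - t))"

definition Sg :: "real \<Rightarrow> real \<Rightarrow> nat \<Rightarrow> (nat \<Rightarrow> real \<Rightarrow> real) \<Rightarrow> (nat \<Rightarrow> real)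
                  \<Rightarrow> (nat \<Rightarrow> real \<Rightarrow> real) \<Rightarrow> nat \<Rightarrow> real" where
  "Sg \<alpha> \<theta> T C K F t = fst (snd (gridstate \<alpha> \<theta> T C K F (T - 1 - t)))"

definition sg :: "real \<Rightarrow> real \<Rightarrow> nat \<Rightarrow> (nat \<Rightarrow> real \<Rightarrow> real) \<Rightarrow> (nat \<Rightarrow> real)
                  \<Rightarrow> (nat \<Rightarrow> real \<Rightarrow> real) \<Rightarrow> nat \<Rightarrow> real" where
  "sg \<alpha> \<theta> T C K F t = fst (snd (snd (gridstate \<alpha> \<theta> T C K F (T - 1 - t))))"

text \<open>Backward recursion for (psibar_t, phibar_t), index k for t = T - 1 - k.
  s is the threshold sequence s_t, gamma the Lipschitz constants.\<close>
fun psiphi :: "real \<Rightarrow> real \<Rightarrow> nat \<Rightarrow> (nat \<Rightarrow> real) \<Rightarrow> (nat \<Rightarrow> real \<Rightarrow> real) \<Rightarrow> (nat \<Rightarrow> real)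
               \<Rightarrow> nat \<Rightarrow> (real \<Rightarrow> real \<Rightarrow> real) \<times> (real \<Rightarrow> real \<Rightarrow> real)" where
  "psiphi \<alpha> \<theta> T s F \<gamma> 0 =
     ((\<lambda>x y. \<gamma> (T - 1) * x),
      (\<lambda>x y. if y < s (T - 1) then 0 else \<gamma> (T - 1) * x))"
| "psiphi \<alpha> \<theta> T s F \<gamma> (Suc k) =
     (let t = T - 2 - k;
          \<phi>' = snd (psiphi \<alpha> \<theta> T s F \<gamma> k);
          f = (\<lambda>n. F t (zg \<theta> (n + 1)) - F t (zg \<theta> n));
          \<psi> = (\<lambda>x y. if y < s (Suc t) - \<theta> then \<gamma> t * x
                     else \<gamma> t * x + \<alpha> * (\<Sum>m\<in>{-1 .. \<lfloor>(y - s (Suc t)) / \<theta>\<rfloor>}. \<phi>' x (y - zg \<theta> m) * f m));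
          \<phi> = (\<lambda>x y. if y < s t then 0 else if y - x < s t then \<psi> (y - s t + \<theta>) y else \<psi> x y)
      in (\<psi>, \<phi>))"

definition psibar :: "real \<Rightarrow> real \<Rightarrow> nat \<Rightarrow> (nat \<Rightarrow> real) \<Rightarrow> (nat \<Rightarrow> real \<Rightarrow> real) \<Rightarrow> (nat \<Rightarrow> real)
                      \<Rightarrow> nat \<Rightarrow> real \<Rightarrow> real \<Rightarrow> real" where
  "psibar \<alpha> \<theta> T s F \<gamma> t = fst (psiphi \<alpha> \<theta> T s F \<gamma> (T - 1 - t))"

primrec lam :: "real \<Rightarrow> (nat \<Rightarrow> real) \<Rightarrow> nat \<Rightarrow> real \<Rightarrow> nat \<Rightarrow> real" where
  "lam \<theta> S t x 0 = x"
| "lam \<theta> S t x (Suc i) = max (lam \<theta> S t x i) (S (t + i)) + \<theta>"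

definition epsbar :: "real \<Rightarrow> real \<Rightarrow> nat \<Rightarrow> (nat \<Rightarrow> real \<Rightarrow> real) \<Rightarrow> (nat \<Rightarrow> real)
                      \<Rightarrow> (nat \<Rightarrow> real \<Rightarrow> real) \<Rightarrow> (nat \<Rightarrow> real) \<Rightarrow> nat \<Rightarrow> real \<Rightarrow> real" where
  "epsbar \<alpha> \<theta> T C K F \<gamma> t x =
     (let S = Sg \<alpha> \<theta> T C K F; s = sg \<alpha> \<theta> T C K F in
      if t = T - 2 then \<alpha> * \<gamma> (T - 1) * \<theta>
      else \<alpha> ^ (T - 1 - t) * \<gamma> (T - 1) * \<theta>
         + (\<Sum>i = 0 .. T - 3 - t. 2 * \<alpha> ^ i *
              (psibar \<alpha> \<theta> T s F \<gamma> (t + i) \<theta> (max (lam \<theta> S t x i) (S (t + i))) - \<gamma> (t + i) * \<theta>)))"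

definition Ueps :: "real \<Rightarrow> real \<Rightarrow> nat \<Rightarrow> (nat \<Rightarrow> real \<Rightarrow> real) \<Rightarrow> (nat \<Rightarrow> real)
                      \<Rightarrow> (nat \<Rightarrow> real \<Rightarrow> real) \<Rightarrow> (nat \<Rightarrow> real) \<Rightarrow> nat \<Rightarrow> real \<Rightarrow> real" where
  "Ueps \<alpha> \<theta> T C K F \<gamma> t x =
     (let S = Sg \<alpha> \<theta> T C K F; s = sg \<alpha> \<theta> T C K F in
      \<alpha> ^ (T - 1 - t) * \<gamma> (T - 1) * \<theta>
      + 2 * \<theta> * (\<Sum>i = 0 .. T - 3 - t. \<Sum>n = 1 .. T - 1 - t - i.
           \<alpha> ^ (n + i) * \<gamma> (t + i + n) *
           (\<Prod>m = 0 .. n - 1. F (t + i + m)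
               (max (lam \<theta> S t x i) (S (t + i)) + real (m + 1) * \<theta> - s (t + i + m + 1)))))"

definition Ubar :: "real \<Rightarrow> real \<Rightarrow> nat \<Rightarrow> (nat \<Rightarrow> real) \<Rightarrow> nat \<Rightarrow> real" where
  "Ubar \<alpha> \<theta> T \<gamma> t =
     \<alpha> ^ (T - 1 - t) * \<gamma> (T - 1) * \<theta>
     + 2 * \<theta> * (\<Sum>i = 0 .. T - 3 - t. \<Sum>n = 1 .. T - 1 - t - i. \<alpha> ^ (n + i) * \<gamma> (t + i + n))"

end

theory Submission
  imports Defs
begin

definition isg :: "real \<Rightarrow> real \<Rightarrow> bool" where
  "isg \<theta> y = (\<exists>m. y = zg \<theta> m)"

lemma isg_zg[simp]: "isg \<theta> (zg \<theta> m)"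
  unfolding isg_def by blast

lemma isg_sep:
  assumes "\<theta> > 0" "isg \<theta> a" "isg \<theta> b" "a < b" shows "a + \<theta> \<le> b"
proof -
  obtain m n where m: "a = of_int m * \<theta>" and n: "b = of_int n * \<theta>"
    using assms unfolding isg_def zg_def by blast
  have "m < n" using assms(1,4) m n by (simp add: mult_less_cancel_right)
  hence "of_int m + 1 \<le> (of_int n :: real)" by linarith
  hence "(of_int m + 1) * \<theta> \<le> of_int n * \<theta>" using assms(1) by (simp add: mult_right_mono)
  thus ?thesis using m n by (simp add: algebra_simps)
qed

lemma isg_add: "isg \<theta> a \<Longrightarrow> isg \<theta> b \<Longrightarrow> isg \<theta> (a + b)"
  unfolding isg_def zg_def by (metis distrib_right of_int_add)

lemma isg_diff: "isg \<theta> a \<Longrightarrow> isg \<theta> b \<Longrightarrow> isg \<theta> (a - b)"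
  unfolding isg_def zg_def by (metis left_diff_distrib of_int_diff)

lemma isg_theta: "isg \<theta> \<theta>"
  unfolding isg_def zg_def by (rule exI[of _ 1]) simp

lemma isg_max: "isg \<theta> a \<Longrightarrow> isg \<theta> b \<Longrightarrow> isg \<theta> (max a b)"
  by (simp add: max_def)

lemma grid_Sup_in:
  assumes th: "\<theta> > 0" and ne: "A \<noteq> {}" and bd: "bdd_above A" and g: "\<And>a. a \<in> A \<Longrightarrow> isg \<theta> a"
  shows "Sup A \<in> A"
proof -
  obtain a where a: "a \<in> A" "Sup A - \<theta> < a"
  proof (rule ccontr)
    assume "\<not> thesis"
    hence "\<forall>a\<in>A. a \<le> Sup A - \<theta>" using that by force
    hence "Sup A \<le> Sup A - \<theta>" using ne by (intro cSup_least) auto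
    thus False using th by simp
  qed
  have "\<And>b. b \<in> A \<Longrightarrow> b \<le> a"
  proof (rule ccontr)
    fix b assume b: "b \<in> A" "\<not> b \<le> a"
    hence "a + \<theta> \<le> b" using isg_sep[OF th g[OF a(1)] g[OF b(1)]] by simp
    moreover have "b \<le> Sup A" using bd b by (simp add: cSup_upper)
    ultimately show False using a by simp
  qed
  hence "Sup A = a" using a by (intro cSup_eq_maximum) auto
  thus ?thesis using a by simp
qed

lemma grid_Inf_in:
  assumes th: "\<theta> > 0" and ne: "A \<noteq> {}" and bd: "bdd_below A" and g: "\<And>a. a \<in> A \<Longrightarrow> isg \<theta> a"
  shows "Inf A \<in> A"
proof -
  obtain a where a: "a \<in> A" "a < Inf A + \<theta>"
  proof (rule ccontr)
    assume "\<not> thesis"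
    hence "\<forall>a\<in>A. Inf A + \<theta> \<le> a" using that by force
    hence "Inf A + \<theta> \<le> Inf A" using ne by (intro cInf_greatest) auto
    thus False using th by simp
  qed
  have "\<And>b. b \<in> A \<Longrightarrow> a \<le> b"
  proof (rule ccontr)
    fix b assume b: "b \<in> A" "\<not> a \<le> b"
    hence "b + \<theta> \<le> a" using isg_sep[OF th g[OF b(1)] g[OF a(1)]] by simp
    moreover have "Inf A \<le> b" using bd b by (simp add: cInf_lower)
    ultimately show False using a by simp
  qed
  hence "Inf A = a" using a by (intro cInf_eq_minimum) auto
  thus ?thesis using a by simp
qed

lemma zg_floor_le: "\<theta> > 0 \<Longrightarrow> zg \<theta> \<lfloor>v / \<theta>\<rfloor> \<le> v"
  unfolding zg_def by (metis floor_divide_lower)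

lemma zg_ceil_ge: "\<theta> > 0 \<Longrightarrow> v \<le> zg \<theta> \<lceil>v / \<theta>\<rceil>"
  unfolding zg_def by (metis ceiling_divide_upper)


lemma gs_grid:
  fixes C :: "nat \<Rightarrow> real \<Rightarrow> real"
  assumes th: "\<theta> > 0" and Kt: "K (T - 2 - k) \<ge> 0"
    and coer: "\<And>c. \<exists>R. \<forall>y. R \<le> \<bar>y\<bar> \<longrightarrow> c < C (T - 2 - k) y"
  shows "isg \<theta> (fst (snd (gridstate \<alpha> \<theta> T C K F (Suc k))))
       \<and> isg \<theta> (fst (snd (snd (gridstate \<alpha> \<theta> T C K F (Suc k)))))"
proof -
  obtain H' S' s' Ib' where st: "gridstate \<alpha> \<theta> T C K F k = (H', S', s', Ib')"
    by (metis prod.exhaust)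
  define t where "t = T - 2 - k"
  define V where "V = (\<lambda>y. if y < s' then H' S' + K (Suc t) else H' y)"
  define f where "f = (\<lambda>n. F t (zg \<theta> (n + 1)) - F t (zg \<theta> n))"
  define H where "H = (\<lambda>y. C t y + \<alpha> * (\<Sum>j. V (y - zg \<theta> (int j - 1)) * f (int j - 1)))"
  define v where "v = min (Ib' - \<theta>) (Cm C t)"
  define I where "I = Sup {zg \<theta> m | m. zg \<theta> m < v}"
  define A where "A = {zg \<theta> m | m. zg \<theta> m \<le> I \<and> C t (zg \<theta> m) > C t I + K t}"
  define Ib where "Ib = Sup A + \<theta>"
  define SUt where "SUt = SU C K \<theta> t"
  define Hmin where "Hmin = Inf {H (zg \<theta> n) | n. I \<le> zg \<theta> n \<and> zg \<theta> n \<le> SUt}"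
  define S where "S = Sup {zg \<theta> m | m. I \<le> zg \<theta> m \<and> zg \<theta> m \<le> SUt \<and> H (zg \<theta> m) = Hmin}"
  define B where "B = {zg \<theta> m | m. Ib \<le> zg \<theta> m \<and> zg \<theta> m \<le> S \<and> H (zg \<theta> m) \<le> H S + K t}"
  define s where "s = (if K t = 0 then S else Inf B)"
  have eq: "gridstate \<alpha> \<theta> T C K F (Suc k) = (H, S, s, Ib)"
    unfolding s_def B_def S_def Hmin_def SUt_def Ib_def A_def I_def v_def H_def f_def V_def t_def
    by (simp only: gridstate.simps st Let_def prod.case)
  have coer': "\<And>c. \<exists>R. \<forall>y. R \<le> \<bar>y\<bar> \<longrightarrow> c < C t y" using coer t_def by simp
  have I_in: "I \<in> {zg \<theta> m | m. zg \<theta> m < v}"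
    unfolding I_def
  proof (rule grid_Sup_in[OF th])
    have "zg \<theta> (\<lfloor>v / \<theta>\<rfloor> - 1) < v"
      using zg_floor_le[OF th, of v] th by (simp add: zg_def algebra_simps)
    thus "{zg \<theta> m |m. zg \<theta> m < v} \<noteq> {}" by blast
    show "bdd_above {zg \<theta> m |m. zg \<theta> m < v}"
      by (rule bdd_aboveI[of _ v]) auto
  qed auto
  then obtain mI where mI: "I = zg \<theta> mI" "I < v" by blast
  have Ig: "isg \<theta> I" using mI by simp
  obtain R1 where R1: "\<forall>y. R1 \<le> \<bar>y\<bar> \<longrightarrow> C t I + K t < C t y" using coer' by blast
  have A_ne: "A \<noteq> {}"
  proof -
    let ?w = "min I (- \<bar>R1\<bar>)"
    have z: "zg \<theta> \<lfloor>?w / \<theta>\<rfloor> \<le> ?w" by (rule zg_floor_le[OF th])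
    hence "R1 \<le> \<bar>zg \<theta> \<lfloor>?w / \<theta>\<rfloor>\<bar>" by linarith
    hence "C t I + K t < C t (zg \<theta> \<lfloor>?w / \<theta>\<rfloor>)" using R1 by blast
    thus ?thesis unfolding A_def using z by force
  qed
  have A_bd: "bdd_above A" unfolding A_def by (rule bdd_aboveI[of _ I]) auto
  have "Sup A \<in> A" by (rule grid_Sup_in[OF th A_ne A_bd]) (auto simp: A_def)
  then obtain ma where ma: "Sup A = zg \<theta> ma" "zg \<theta> ma \<le> I" "C t (zg \<theta> ma) > C t I + K t"
    unfolding A_def by blast
  have Kt': "K t \<ge> 0" using Kt t_def by simp
  have "zg \<theta> ma \<noteq> I" using ma(3) Kt' by auto
  hence "zg \<theta> ma < I" using ma(2) by simp
  hence "zg \<theta> ma + \<theta> \<le> I" using isg_sep[OF th _ Ig] by simp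
  hence Ib_le: "Ib \<le> I" using ma(1) Ib_def by simp
  define c0 where "c0 = C t (zg \<theta> (n0 C \<theta> t)) + K t"
  have SU_eq: "SUt = Inf {zg \<theta> m | m. zg \<theta> m \<ge> Cm C t \<and> C t (zg \<theta> m) > c0}"
    unfolding SUt_def SU_def c0_def by simp
  obtain R2 where R2: "\<forall>y. R2 \<le> \<bar>y\<bar> \<longrightarrow> c0 < C t y" using coer' by blast
  have "SUt \<in> {zg \<theta> m | m. zg \<theta> m \<ge> Cm C t \<and> C t (zg \<theta> m) > c0}"
    unfolding SU_eq
  proof (rule grid_Inf_in[OF th])
    let ?w = "max (Cm C t) \<bar>R2\<bar>"
    have z: "?w \<le> zg \<theta> \<lceil>?w / \<theta>\<rceil>" by (rule zg_ceil_ge[OF th])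
    hence "R2 \<le> \<bar>zg \<theta> \<lceil>?w / \<theta>\<rceil>\<bar>" by linarith
    hence "c0 < C t (zg \<theta> \<lceil>?w / \<theta>\<rceil>)" using R2 by blast
    thus "{zg \<theta> m | m. zg \<theta> m \<ge> Cm C t \<and> C t (zg \<theta> m) > c0} \<noteq> {}" using z by force
    show "bdd_below {zg \<theta> m | m. zg \<theta> m \<ge> Cm C t \<and> C t (zg \<theta> m) > c0}"
      by (rule bdd_belowI[of _ "Cm C t"]) auto
  qed auto
  hence SU_ge: "SUt \<ge> Cm C t" by blast
  have I_le_SU: "I \<le> SUt" using mI(2) SU_ge v_def by simp
  define Z where "Z = {n. I \<le> zg \<theta> n \<and> zg \<theta> n \<le> SUt}"
  have Zsub: "Z \<subseteq> {\<lceil>I / \<theta>\<rceil> .. \<lfloor>SUt / \<theta>\<rfloor>}"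
  proof
    fix n assume "n \<in> Z"
    hence "I \<le> of_int n * \<theta>" "of_int n * \<theta> \<le> SUt" unfolding Z_def zg_def by auto
    hence "I / \<theta> \<le> of_int n" "of_int n \<le> SUt / \<theta>" using th by (auto simp: field_simps)
    thus "n \<in> {\<lceil>I / \<theta>\<rceil> .. \<lfloor>SUt / \<theta>\<rfloor>}" by (simp add: ceiling_le_iff le_floor_iff)
  qed
  have Zfin: "finite Z" using Zsub finite_subset by blast
  have Zne: "mI \<in> Z" using mI I_le_SU unfolding Z_def by simp
  have Hset: "{H (zg \<theta> n) | n. I \<le> zg \<theta> n \<and> zg \<theta> n \<le> SUt} = (\<lambda>n. H (zg \<theta> n)) ` Z"
    unfolding Z_def by auto
  have "Hmin \<in> (\<lambda>n. H (zg \<theta> n)) ` Z"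
    unfolding Hmin_def Hset using Zfin Zne
    by (metis Min_in cInf_eq_Min empty_iff finite_imageI image_is_empty)
  then obtain nh where nh: "nh \<in> Z" "H (zg \<theta> nh) = Hmin" by blast
  have "S \<in> {zg \<theta> m | m. I \<le> zg \<theta> m \<and> zg \<theta> m \<le> SUt \<and> H (zg \<theta> m) = Hmin}"
    unfolding S_def
  proof (rule grid_Sup_in[OF th])
    show "{zg \<theta> m | m. I \<le> zg \<theta> m \<and> zg \<theta> m \<le> SUt \<and> H (zg \<theta> m) = Hmin} \<noteq> {}"
      using nh unfolding Z_def by blast
    show "bdd_above {zg \<theta> m | m. I \<le> zg \<theta> m \<and> zg \<theta> m \<le> SUt \<and> H (zg \<theta> m) = Hmin}"
      by (rule bdd_aboveI[of _ SUt]) auto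
  qed auto
  then obtain mS where mS: "S = zg \<theta> mS" "I \<le> S" by blast
  have Sg: "isg \<theta> S" using mS by simp
  have sg: "isg \<theta> s"
  proof (cases "K t = 0")
    case True thus ?thesis using Sg s_def by simp
  next
    case False
    have "Inf B \<in> B"
    proof (rule grid_Inf_in[OF th])
      have "S \<in> B" unfolding B_def using mS Ib_le Kt' by auto
      thus "B \<noteq> {}" by blast
      show "bdd_below B" unfolding B_def by (rule bdd_belowI[of _ Ib]) auto
    qed (auto simp: B_def)
    hence "isg \<theta> (Inf B)" unfolding B_def by auto
    thus ?thesis using False s_def by simp
  qed
  show ?thesis using eq Sg sg by simp
qed


definition Prd :: "(nat \<Rightarrow> real \<Rightarrow> real) \<Rightarrow> (nat \<Rightarrow> real) \<Rightarrow> real \<Rightarrow> nat \<Rightarrow> real \<Rightarrow> nat \<Rightarrow> real" where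
  "Prd F s \<theta> t y n = (\<Prod>m<n. F (t + m) (y + real (m + 1) * \<theta> - s (t + m + 1)))"

definition Bd :: "real \<Rightarrow> real \<Rightarrow> nat \<Rightarrow> (nat \<Rightarrow> real \<Rightarrow> real) \<Rightarrow> (nat \<Rightarrow> real) \<Rightarrow> (nat \<Rightarrow> real)
   \<Rightarrow> nat \<Rightarrow> real \<Rightarrow> real" where
  "Bd \<alpha> \<theta> T F s \<gamma> t y = \<gamma> t * \<theta> + \<theta> * (\<Sum>n<T - 1 - t. \<alpha> ^ Suc n * \<gamma> (t + Suc n) * Prd F s \<theta> t y (Suc n))"

lemma Prd_Suc: "Prd F s \<theta> t y (Suc n) = F t (y + \<theta> - s (Suc t)) * Prd F s \<theta> (Suc t) (y + \<theta>) n"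
  unfolding Prd_def prod.lessThan_Suc_shift
  by (simp add: algebra_simps)

lemma Prd_nn:
  assumes Fnn: "\<And>t' x. t' < T \<Longrightarrow> 0 \<le> F t' x" and "t + n \<le> T"
  shows "0 \<le> Prd F s \<theta> t y n"
  unfolding Prd_def using assms by (intro prod_nonneg) auto

lemma Prd_mono:
  assumes Fnn: "\<And>t' x. t' < T \<Longrightarrow> 0 \<le> F t' x"
    and Fmono: "\<And>t' x y. t' < T \<Longrightarrow> x \<le> y \<Longrightarrow> F t' x \<le> F t' y"
    and "t + n \<le> T" "y \<le> y'"
  shows "Prd F s \<theta> t y n \<le> Prd F s \<theta> t y' n"
  unfolding Prd_def using assms by (intro prod_mono) auto

lemma Bd_nn:
  assumes Fnn: "\<And>t' x. t' < T \<Longrightarrow> 0 \<le> F t' x" and g: "\<And>t'. t' < T \<Longrightarrow> 0 \<le> \<gamma> t'"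
    and a: "\<alpha> \<ge> 0" and th: "\<theta> > 0" and "t < T"
  shows "0 \<le> Bd \<alpha> \<theta> T F s \<gamma> t y"
  unfolding Bd_def using assms
  by (intro add_nonneg_nonneg mult_nonneg_nonneg sum_nonneg Prd_nn[where T=T]) auto

lemma Bd_mono:
  assumes Fnn: "\<And>t' x. t' < T \<Longrightarrow> 0 \<le> F t' x"
    and Fmono: "\<And>t' x y. t' < T \<Longrightarrow> x \<le> y \<Longrightarrow> F t' x \<le> F t' y"
    and g: "\<And>t'. t' < T \<Longrightarrow> 0 \<le> \<gamma> t'"
    and a: "\<alpha> \<ge> 0" and th: "\<theta> > 0" and "t < T" and "y \<le> y'"
  shows "Bd \<alpha> \<theta> T F s \<gamma> t y \<le> Bd \<alpha> \<theta> T F s \<gamma> t y'"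
  unfolding Bd_def using assms
  by (intro add_left_mono mult_left_mono sum_mono Prd_mono[where T=T]) auto

lemma Bd_rec:
  assumes "Suc t < T"
  shows "Bd \<alpha> \<theta> T F s \<gamma> t y = \<gamma> t * \<theta> + \<alpha> * F t (y + \<theta> - s (Suc t)) * Bd \<alpha> \<theta> T F s \<gamma> (Suc t) (y + \<theta>)"
proof -
  have N: "T - 1 - t = Suc (T - 1 - Suc t)" using assms by simp
  show ?thesis
    unfolding Bd_def N sum.lessThan_Suc_shift Prd_Suc
    by (simp add: Prd_def sum_distrib_left algebra_simps)
qed

lemma tele_int:
  fixes g :: "int \<Rightarrow> real"
  assumes "N \<ge> -1"
  shows "(\<Sum>m\<in>{-1..N}. g (m + 1) - g m) = g (N + 1) - g (-1)"
  using assms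
proof (induction N rule: int_ge_induct)
  case base thus ?case by simp
next
  case (step i)
  have "{-1..1 + i} = insert (1 + i) {-1..i}" using step by (intro atLeastAtMostPlus1_int_conv) simp
  thus ?case using step by (simp add: add.commute)
qed


lemma psi_main:
  fixes \<alpha> \<theta> :: real and T :: nat and s :: "nat \<Rightarrow> real" and F :: "nat \<Rightarrow> real \<Rightarrow> real" and \<gamma>
  assumes th: "\<theta> > 0" and a: "\<alpha> \<ge> 0"
    and Fmono: "\<And>t' x y. t' < T \<Longrightarrow> x \<le> y \<Longrightarrow> F t' x \<le> F t' y"
    and Fnn: "\<And>t' x. t' < T \<Longrightarrow> 0 \<le> F t' x"
    and g: "\<And>t'. t' < T \<Longrightarrow> 0 \<le> \<gamma> t'"
    and sg: "\<And>t'. t' + 2 \<le> T \<Longrightarrow> isg \<theta> (s t')"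
  shows "k < T \<Longrightarrow> (\<forall>y. isg \<theta> y \<longrightarrow> fst (psiphi \<alpha> \<theta> T s F \<gamma> k) \<theta> y \<le> Bd \<alpha> \<theta> T F s \<gamma> (T - 1 - k) y)
      \<and> (\<forall>y. isg \<theta> y \<longrightarrow> snd (psiphi \<alpha> \<theta> T s F \<gamma> k) \<theta> y \<le> Bd \<alpha> \<theta> T F s \<gamma> (T - 1 - k) y)"
proof (induction k)
  case 0
  have "Bd \<alpha> \<theta> T F s \<gamma> (T - 1) y = \<gamma> (T - 1) * \<theta>" for y unfolding Bd_def by simp
  moreover have "0 \<le> \<gamma> (T - 1)" using 0 g by simp
  ultimately show ?case using th by simp
next
  case (Suc k)
  define t where "t = T - 2 - k"
  have tk: "T - 1 - Suc k = t" "T - 1 - k = Suc t" "t + 2 \<le> T" "Suc t < T" "t < T"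
    using Suc.prems t_def by auto
  have IH: "\<And>y. isg \<theta> y \<Longrightarrow> snd (psiphi \<alpha> \<theta> T s F \<gamma> k) \<theta> y \<le> Bd \<alpha> \<theta> T F s \<gamma> (Suc t) y"
    using Suc.IH Suc.prems tk(2) by auto
  define \<phi>' where "\<phi>' = snd (psiphi \<alpha> \<theta> T s F \<gamma> k)"
  define f where "f = (\<lambda>n. F t (zg \<theta> (n + 1)) - F t (zg \<theta> n))"
  define \<psi> where "\<psi> = (\<lambda>x y. if y < s (Suc t) - \<theta> then \<gamma> t * x
                     else \<gamma> t * x + \<alpha> * (\<Sum>m\<in>{-1 .. \<lfloor>(y - s (Suc t)) / \<theta>\<rfloor>}. \<phi>' x (y - zg \<theta> m) * f m))"
  define \<phi> where "\<phi> = (\<lambda>x y. if y < s t then 0 else if y - x < s t then \<psi> (y - s t + \<theta>) y else \<psi> x y)"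
  have eq: "psiphi \<alpha> \<theta> T s F \<gamma> (Suc k) = (\<psi>, \<phi>)"
    unfolding \<phi>_def \<psi>_def f_def \<phi>'_def t_def by (simp only: psiphi.simps Let_def)
  let ?B = "Bd \<alpha> \<theta> T F s \<gamma>"
  have Bnn: "\<And>t' y. t' < T \<Longrightarrow> 0 \<le> ?B t' y" using Bd_nn[where T=T and F=F and \<gamma>=\<gamma>, OF Fnn g a th] by blast
  have rec: "\<And>y. ?B t y = \<gamma> t * \<theta> + \<alpha> * F t (y + \<theta> - s (Suc t)) * ?B (Suc t) (y + \<theta>)"
    using Bd_rec[OF tk(4)] by blast
  have extra_nn: "\<And>y. 0 \<le> \<alpha> * F t (y + \<theta> - s (Suc t)) * ?B (Suc t) (y + \<theta>)"
    using a Fnn[OF tk(5)] Bnn[OF tk(4)] by simp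
  have psi: "\<psi> \<theta> y \<le> ?B t y" if yg: "isg \<theta> y" for y
  proof (cases "y < s (Suc t) - \<theta>")
    case True thus ?thesis using rec[of y] extra_nn[of y] by (simp add: \<psi>_def)
  next
    case False
    define N where "N = \<lfloor>(y - s (Suc t)) / \<theta>\<rfloor>"
    have "-1 \<le> (y - s (Suc t)) / \<theta>" using False th by (simp add: field_simps)
    hence N1: "N \<ge> -1" unfolding N_def by linarith
    have "of_int N \<le> (y - s (Suc t)) / \<theta>" unfolding N_def by simp
    hence "of_int N * \<theta> \<le> y - s (Suc t)" using th by (simp add: field_simps)
    hence zN: "zg \<theta> (N + 1) \<le> y + \<theta> - s (Suc t)" unfolding zg_def by (simp add: algebra_simps)
    let ?b = "?B (Suc t) (y + \<theta>)"
    have fnn: "\<And>m. 0 \<le> f m" unfolding f_def using Fmono[OF tk(5)] th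
      by (simp add: zg_def algebra_simps)
    have trm: "\<phi>' \<theta> (y - zg \<theta> m) * f m \<le> ?b * f m" if m: "m \<in> {-1..N}" for m
    proof -
      have "\<phi>' \<theta> (y - zg \<theta> m) \<le> ?B (Suc t) (y - zg \<theta> m)"
        unfolding \<phi>'_def by (rule IH) (simp add: isg_diff yg)
      also have "\<dots> \<le> ?b"
      proof (rule Bd_mono[where T=T and F=F and \<gamma>=\<gamma>, OF Fnn Fmono g a th tk(4)])
        have "-1 \<le> m" using m by simp
        hence "- \<theta> \<le> of_int m * \<theta>" using th
          by (metis mult_minus_left mult_right_mono of_int_le_iff of_int_minus of_int_1 less_le mult_1)
        thus "y - zg \<theta> m \<le> y + \<theta>" unfolding zg_def by simp
      qed
      finally show ?thesis using fnn[of m] by (simp add: mult_right_mono)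
    qed
    have "(\<Sum>m\<in>{-1..N}. \<phi>' \<theta> (y - zg \<theta> m) * f m) \<le> (\<Sum>m\<in>{-1..N}. ?b * f m)"
      by (rule sum_mono) (rule trm)
    also have "\<dots> = ?b * (F t (zg \<theta> (N + 1)) - F t (zg \<theta> (-1)))"
      unfolding sum_distrib_left[symmetric] f_def
      using tele_int[OF N1, of "\<lambda>n. F t (zg \<theta> n)"] by simp
    also have "\<dots> \<le> ?b * F t (y + \<theta> - s (Suc t))"
    proof (rule mult_left_mono)
      show "0 \<le> ?b" using Bnn tk(4) by blast
      have "F t (zg \<theta> (N + 1)) \<le> F t (y + \<theta> - s (Suc t))" by (rule Fmono[OF tk(5) zN])
      thus "F t (zg \<theta> (N + 1)) - F t (zg \<theta> (- 1)) \<le> F t (y + \<theta> - s (Suc t))"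
        using Fnn[OF tk(5), of "zg \<theta> (- 1)"] by linarith
    qed
    finally have S: "(\<Sum>m\<in>{-1..N}. \<phi>' \<theta> (y - zg \<theta> m) * f m) \<le> ?b * F t (y + \<theta> - s (Suc t))" .
    have "\<psi> \<theta> y = \<gamma> t * \<theta> + \<alpha> * (\<Sum>m\<in>{-1..N}. \<phi>' \<theta> (y - zg \<theta> m) * f m)"
      using False unfolding \<psi>_def N_def by simp
    also have "\<dots> \<le> \<gamma> t * \<theta> + \<alpha> * (?b * F t (y + \<theta> - s (Suc t)))"
      using S a by (simp add: mult_left_mono)
    also have "\<dots> = ?B t y" using rec[of y] by (simp add: algebra_simps)
    finally show ?thesis .
  qed
  have phi: "\<phi> \<theta> y \<le> ?B t y" if yg: "isg \<theta> y" for y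
  proof -
    have stg: "isg \<theta> (s t)" using sg tk(3) by blast
    consider "y < s t" | "\<not> y < s t" "y - \<theta> < s t" | "\<not> y < s t" "\<not> y - \<theta> < s t" by blast
    thus ?thesis
    proof cases
      case 1 thus ?thesis using Bnn[OF tk(5)] by (simp add: \<phi>_def)
    next
      case 2
      have "y = s t"
      proof (rule ccontr)
        assume "y \<noteq> s t"
        hence "s t < y" using 2 by simp
        hence "s t + \<theta> \<le> y" using isg_sep[OF th stg yg] by simp
        thus False using 2 by simp
      qed
      thus ?thesis using psi[OF yg] 2 by (simp add: \<phi>_def)
    next
      case 3 thus ?thesis using psi[OF yg] by (simp add: \<phi>_def)
    qed
  qed
  show ?case using psi phi eq tk(1) by simp
qed


lemma conv_sum:
  fixes \<alpha> \<theta> Y :: real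
  shows "(\<Sum>n = 1 .. N. \<alpha> ^ (n + i) * \<gamma> (t' + n) *
           (\<Prod>m = 0 .. n - 1. F (t' + m) (Y + real (m + 1) * \<theta> - s (t' + m + 1))))
       = \<alpha> ^ i * (\<Sum>n<N. \<alpha> ^ Suc n * \<gamma> (t' + Suc n) * Prd F s \<theta> t' Y (Suc n))"
proof -
  have "(\<Sum>n = 1 .. N. \<alpha> ^ (n + i) * \<gamma> (t' + n) *
           (\<Prod>m = 0 .. n - 1. F (t' + m) (Y + real (m + 1) * \<theta> - s (t' + m + 1))))
      = (\<Sum>n<N. \<alpha> ^ (Suc n + i) * \<gamma> (t' + Suc n) *
           (\<Prod>m = 0 .. n. F (t' + m) (Y + real (m + 1) * \<theta> - s (t' + m + 1))))"
    by (subst image_Suc_lessThan[symmetric], subst sum.reindex) auto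
  also have "\<dots> = \<alpha> ^ i * (\<Sum>n<N. \<alpha> ^ Suc n * \<gamma> (t' + Suc n) * Prd F s \<theta> t' Y (Suc n))"
    unfolding sum_distrib_left Prd_def
    by (intro sum.cong refl) (simp add: power_add atLeast0AtMost lessThan_Suc_atMost)
  finally show ?thesis .
qed

lemma lam_grid:
  assumes "isg \<theta> x" "\<And>j. t + j + 2 \<le> T \<Longrightarrow> isg \<theta> (S (t + j))"
  shows "t + i + 1 \<le> T \<Longrightarrow> isg \<theta> (lam \<theta> S t x i)"
proof (induction i)
  case 0 thus ?case using assms by simp
next
  case (Suc i)
  thus ?case using assms by (simp add: isg_add isg_max isg_theta)
qed


theorem theorem4p5:
  fixes \<alpha> \<theta> :: real and T :: nat
    and c K :: "nat \<Rightarrow> real" and G :: "nat \<Rightarrow> real \<Rightarrow> real"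
    and D :: "nat \<Rightarrow> real measure" and \<gamma> :: "nat \<Rightarrow> real"
  assumes T3: "T \<ge> 3"
    and alpha: "0 < \<alpha>" "\<alpha> \<le> 1"
    and theta: "\<theta> > 0"
    and Kpos: "\<And>t. t < T \<Longrightarrow> K t \<ge> 0"
    and Kdec: "\<And>t. t + 2 \<le> T \<Longrightarrow> K t \<ge> \<alpha> * K (Suc t)"
    and Dprob: "\<And>t. t < T \<Longrightarrow> prob_space (D t)"
    and Dborel: "\<And>t. t < T \<Longrightarrow> sets (D t) = sets borel"
    and Dnonneg: "\<And>t. t < T \<Longrightarrow> AE x in D t. 0 \<le> x"
    and Dmean: "\<And>t. t < T \<Longrightarrow> integrable (D t) (\<lambda>x. x)"
    and Cconvex: "\<And>t. t < T \<Longrightarrow> convex_on UNIV (Cfun \<alpha> c G D t)"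
    and Ccoercive: "\<And>t. t < T \<Longrightarrow> filterlim (Cfun \<alpha> c G D t) at_top at_infinity"
    and gamma: "\<And>t. t < T \<Longrightarrow> \<gamma> t \<ge> 0"
    and Clip: "\<And>t x y. t < T \<Longrightarrow> \<bar>Cfun \<alpha> c G D t x - Cfun \<alpha> c G D t y\<bar> \<le> \<gamma> t * \<bar>x - y\<bar>"
  shows "\<forall>k::int. \<forall>t. t \<le> T - 3 \<longrightarrow>
           epsbar \<alpha> \<theta> T (Cfun \<alpha> c G D) K (Fd D) \<gamma> t (zg \<theta> k)
             \<le> Ueps \<alpha> \<theta> T (Cfun \<alpha> c G D) K (Fd D) \<gamma> t (zg \<theta> k)
         \<and> Ueps \<alpha> \<theta> T (Cfun \<alpha> c G D) K (Fd D) \<gamma> t (zg \<theta> k) \<le> Ubar \<alpha> \<theta> T \<gamma> t"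
proof (intro allI impI)
  fix k :: int and t :: nat
  assume tT: "t \<le> T - 3"
  define C where "C = Cfun \<alpha> c G D"
  define F where "F = Fd D"
  define S where "S = Sg \<alpha> \<theta> T C K F"
  define s where "s = sg \<alpha> \<theta> T C K F"
  have Fnn: "\<And>t' x. t' < T \<Longrightarrow> 0 \<le> F t' x" unfolding F_def Fd_def by simp
  have Fle1: "\<And>t' x. t' < T \<Longrightarrow> F t' x \<le> 1" unfolding F_def Fd_def
    using Dprob prob_space.prob_le_1 by blast
  have Fmono: "\<And>t' x y. t' < T \<Longrightarrow> x \<le> y \<Longrightarrow> F t' x \<le> F t' y"
  proof -
    fix t' x y assume "t' < T" "(x::real) \<le> y"
    moreover have "{..y} \<in> sets (D t')" using Dborel[OF \<open>t' < T\<close>] by simp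
    ultimately show "F t' x \<le> F t' y" unfolding F_def Fd_def
      using finite_measure.finite_measure_mono[OF prob_space.finite_measure[OF Dprob]] by auto
  qed
  have coer: "\<And>t' c'. t' < T \<Longrightarrow> \<exists>R. \<forall>y. R \<le> \<bar>y\<bar> \<longrightarrow> c' < C t' y"
  proof -
    fix t' c' assume "t' < T"
    hence "\<forall>\<^sub>F y in at_infinity. c' + 1 \<le> C t' y"
      using Ccoercive unfolding C_def filterlim_at_top by blast
    then obtain b where "\<forall>y. b \<le> norm y \<longrightarrow> c' + 1 \<le> C t' y"
      unfolding eventually_at_infinity by blast
    thus "\<exists>R. \<forall>y. R \<le> \<bar>y\<bar> \<longrightarrow> c' < C t' y" by force
  qed
  have grid: "isg \<theta> (S t') \<and> isg \<theta> (s t')" if t': "t' + 2 \<le> T" for t'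
  proof -
    have e1: "T - 1 - t' = Suc (T - 2 - t')" and e2: "T - 2 - (T - 2 - t') = t'" using t' by auto
    have "isg \<theta> (fst (snd (gridstate \<alpha> \<theta> T C K F (Suc (T - 2 - t')))))
       \<and> isg \<theta> (fst (snd (snd (gridstate \<alpha> \<theta> T C K F (Suc (T - 2 - t'))))))"
      by (rule gs_grid[OF theta]) (use t' Kpos coer e2 in auto)
    thus ?thesis unfolding S_def s_def Sg_def sg_def e1 .
  qed
  have sgr: "\<And>t'. t' + 2 \<le> T \<Longrightarrow> isg \<theta> (s t')" using grid by blast
  have PM: "\<And>k'. k' < T \<Longrightarrow> \<forall>y. isg \<theta> y \<longrightarrow> fst (psiphi \<alpha> \<theta> T s F \<gamma> k') \<theta> y \<le> Bd \<alpha> \<theta> T F s \<gamma> (T - 1 - k') y"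
    using psi_main[OF theta _ Fmono Fnn gamma sgr] alpha by auto
  have tne: "t \<noteq> T - 2" using tT T3 by simp
  have term1: "2 * \<alpha> ^ i * (psibar \<alpha> \<theta> T s F \<gamma> (t + i) \<theta> (max (lam \<theta> S t (zg \<theta> k) i) (S (t + i))) - \<gamma> (t + i) * \<theta>)
      \<le> 2 * \<theta> * (\<Sum>n = 1 .. T - 1 - t - i. \<alpha> ^ (n + i) * \<gamma> (t + i + n) *
           (\<Prod>m = 0 .. n - 1. F (t + i + m)
               (max (lam \<theta> S t (zg \<theta> k) i) (S (t + i)) + real (m + 1) * \<theta> - s (t + i + m + 1))))"
    if i: "i \<in> {0 .. T - 3 - t}" for i
  proof -
    let ?Y = "max (lam \<theta> S t (zg \<theta> k) i) (S (t + i))"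
    have Yg: "isg \<theta> ?Y"
    proof (rule isg_max)
      show "isg \<theta> (lam \<theta> S t (zg \<theta> k) i)"
        by (rule lam_grid[where T=T]) (use grid i T3 tT in auto)
      show "isg \<theta> (S (t + i))" using grid i T3 tT by auto
    qed
    have kk: "T - 1 - (t + i) < T" "T - 1 - (T - 1 - (t + i)) = t + i" using i T3 tT by auto
    have "psibar \<alpha> \<theta> T s F \<gamma> (t + i) \<theta> ?Y \<le> Bd \<alpha> \<theta> T F s \<gamma> (t + i) ?Y"
      using PM[OF kk(1)] Yg kk(2) unfolding psibar_def by metis
    hence "psibar \<alpha> \<theta> T s F \<gamma> (t + i) \<theta> ?Y - \<gamma> (t + i) * \<theta>
        \<le> \<theta> * (\<Sum>n<T - 1 - (t + i). \<alpha> ^ Suc n * \<gamma> (t + i + Suc n) * Prd F s \<theta> (t + i) ?Y (Suc n))"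
      unfolding Bd_def by simp
    hence "2 * \<alpha> ^ i * (psibar \<alpha> \<theta> T s F \<gamma> (t + i) \<theta> ?Y - \<gamma> (t + i) * \<theta>)
        \<le> 2 * \<alpha> ^ i * (\<theta> * (\<Sum>n<T - 1 - (t + i). \<alpha> ^ Suc n * \<gamma> (t + i + Suc n) * Prd F s \<theta> (t + i) ?Y (Suc n)))"
      using alpha by (intro mult_left_mono) auto
    also have "\<dots> = 2 * \<theta> * (\<alpha> ^ i * (\<Sum>n<T - 1 - (t + i). \<alpha> ^ Suc n * \<gamma> (t + i + Suc n) * Prd F s \<theta> (t + i) ?Y (Suc n)))"
      by (simp add: algebra_simps)
    also have "\<dots> = 2 * \<theta> * (\<Sum>n = 1 .. T - 1 - t - i. \<alpha> ^ (n + i) * \<gamma> (t + i + n) *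
           (\<Prod>m = 0 .. n - 1. F (t + i + m) (?Y + real (m + 1) * \<theta> - s (t + i + m + 1))))"
      using conv_sum[of \<alpha> i \<gamma> "t + i" F ?Y \<theta> s "T - 1 - (t + i)"] by (simp add: diff_diff_left)
    finally show ?thesis .
  qed
  show "epsbar \<alpha> \<theta> T (Cfun \<alpha> c G D) K (Fd D) \<gamma> t (zg \<theta> k)
             \<le> Ueps \<alpha> \<theta> T (Cfun \<alpha> c G D) K (Fd D) \<gamma> t (zg \<theta> k)
         \<and> Ueps \<alpha> \<theta> T (Cfun \<alpha> c G D) K (Fd D) \<gamma> t (zg \<theta> k) \<le> Ubar \<alpha> \<theta> T \<gamma> t"
  proof
    show "epsbar \<alpha> \<theta> T (Cfun \<alpha> c G D) K (Fd D) \<gamma> t (zg \<theta> k)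
             \<le> Ueps \<alpha> \<theta> T (Cfun \<alpha> c G D) K (Fd D) \<gamma> t (zg \<theta> k)"
      unfolding epsbar_def Ueps_def Let_def C_def[symmetric] F_def[symmetric] S_def[symmetric] s_def[symmetric]
      unfolding if_not_P[OF tne]
      by (intro add_left_mono, subst sum_distrib_left, rule sum_mono, rule term1)
    show "Ueps \<alpha> \<theta> T (Cfun \<alpha> c G D) K (Fd D) \<gamma> t (zg \<theta> k) \<le> Ubar \<alpha> \<theta> T \<gamma> t"
      unfolding Ueps_def Ubar_def Let_def C_def[symmetric] F_def[symmetric] S_def[symmetric] s_def[symmetric]
    proof (intro add_left_mono mult_left_mono sum_mono)
      fix i n assume i: "i \<in> {0 .. T - 3 - t}" and n: "n \<in> {1 .. T - 1 - t - i}"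
      have "(\<Prod>m = 0 .. n - 1. F (t + i + m)
               (max (lam \<theta> S t (zg \<theta> k) i) (S (t + i)) + real (m + 1) * \<theta> - s (t + i + m + 1))) \<le> 1"
        by (rule prod_le_1) (use i n Fnn Fle1 in auto)
      moreover have "0 \<le> \<alpha> ^ (n + i) * \<gamma> (t + i + n)" using alpha gamma i n T3 by auto
      ultimately show "\<alpha> ^ (n + i) * \<gamma> (t + i + n) * (\<Prod>m = 0 .. n - 1. F (t + i + m)
               (max (lam \<theta> S t (zg \<theta> k) i) (S (t + i)) + real (m + 1) * \<theta> - s (t + i + m + 1)))
            \<le> \<alpha> ^ (n + i) * \<gamma> (t + i + n)"
        by (simp add: mult_left_le)
    qed (use theta in auto)
  qed
qed

end
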